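(* For every integer $k\ge 2$ and every $\alpha>2/e$, there is no family of truthful direct-revelation mechanisms (one for each number of rounds $T$) for the $k$-bidder game that is $\alpha$-competitive against selling the business.
   Context: Multiple-bidder game: there are $k\ge 2$ bidders and $T$ rounds; in each round the seller has one divisible item. Bidder $i$ has value $v_{i,t}\in[0,1]$ for the round-$t$ item; values are arbitrary, unknown to the seller, and each bidder knows all of its own values. A type profile is $\mathbf v=(v_{i,t})$; write $|\mathbf v_i|=\sum_t v_{i,t}$. A direct-revelation mechanism specifies, for each profile $\mathbf v$, allocation fractions $r_{\mathbf v,i,t}\in[0,1]$ with $\sum_i r_{\mathbf v,i,t}\le1$, prices $x_{\mathbf v,i,t}$ and end-of-game reimbursements $g_{\mathbf v,i}$; bidders report types, in round $t$ a non-eliminated bidder $i$ gets fraction $r_{\mathbf v,i,t}$ and must pay $x_{\mathbf v,i,t}$ (else it is eliminated forever), and at the end each non-eliminated bidder gets $g_{\mathbf v,i}$. Truthful means: $x_{\mathbf v,i,t}\le r_{\mathbf v,i,t}v_{i,t}$ for all $\mathbf v,i,t$; and for every $\mathbf v$, bidder $i$, profile $\mathbf v'$ differing from $\mathbf v$ only in bidder $i$'s type, and $\tau\le T$ with $x_{\mathbf v',i,t}\le r_{\mathbf v',i,t}v_{i,t}$ for all $t\le\tau$: $\sum_{t=1}^T(r_{\mathbf v,i,t}v_{i,t}-x_{\mathbf v,i,t})+g_{\mathbf v,i}\ge\sum_{t=1}^\tau(r_{\mathbf v',i,t}v_{i,t}-x_{\mathbf v',i,t})+x_{\mathbf v',i,\tau}$.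 Revenue ${\sf Rev}(\mathbf v)=\sum_{i,t}x_{\mathbf v,i,t}-\sum_i g_{\mathbf v,i}$; ${\sf Rev}_{STB}(\mathbf v)$ is the second largest of $|\mathbf v_1|,\dots,|\mathbf v_k|$. A family of mechanisms is $\alpha$-competitive against selling the business if there is $C$ depending only on $k$ with ${\sf Rev}(\mathbf v)\ge\alpha{\sf Rev}_{STB}(\mathbf v)-C$ for all $T$ and $\mathbf v$. *)

theory Defs
  imports Complex_Main
begin

(* Bidders are indexed 0..<k, rounds are indexed 0..<T (round t+1 of the paper is index t).
   A type profile is v :: nat => nat => real with v i t the value of bidder i for round t. *)
type_synonym profile = "nat \<Rightarrow> nat \<Rightarrow> real"

definition valid_profile :: "nat \<Rightarrow> nat \<Rightarrow> profile \<Rightarrow> bool" where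
  "valid_profile k T v \<longleftrightarrow>
     (\<forall>i t. (i < k \<and> t < T \<longrightarrow> 0 \<le> v i t \<and> v i t \<le> 1) \<and>
            (\<not> (i < k \<and> t < T) \<longrightarrow> v i t = 0))"

definition differ_only_in :: "nat \<Rightarrow> profile \<Rightarrow> profile \<Rightarrow> bool" where
  "differ_only_in i v v' \<longleftrightarrow> (\<forall>j. j \<noteq> i \<longrightarrow> v' j = v j)"

(* A direct-revelation mechanism is given by allocation r, prices x and reimbursements g:
   r v i t, x v i t, g v i. *)
definition feasible_mech ::
  "nat \<Rightarrow> nat \<Rightarrow> (profile \<Rightarrow> nat \<Rightarrow> nat \<Rightarrow> real) \<Rightarrow> bool" where
  "feasible_mech k T r \<longleftrightarrow>
     (\<forall>v. valid_profile k T v \<longrightarrow>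
        (\<forall>t<T. (\<forall>i<k. 0 \<le> r v i t \<and> r v i t \<le> 1) \<and> (\<Sum>i<k. r v i t) \<le> 1))"

definition truthful ::
  "nat \<Rightarrow> nat \<Rightarrow> (profile \<Rightarrow> nat \<Rightarrow> nat \<Rightarrow> real) \<Rightarrow> (profile \<Rightarrow> nat \<Rightarrow> nat \<Rightarrow> real)
     \<Rightarrow> (profile \<Rightarrow> nat \<Rightarrow> real) \<Rightarrow> bool" where
  "truthful k T r x g \<longleftrightarrow>
     (\<forall>v. valid_profile k T v \<longrightarrow> (\<forall>i<k. \<forall>t<T. x v i t \<le> r v i t * v i t)) \<and>
     (\<forall>v v' i \<tau>. valid_profile k T v \<longrightarrow> valid_profile k T v' \<longrightarrow> i < k \<longrightarrow>
        differ_only_in i v v' \<longrightarrow> \<tau> < T \<longrightarrow>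
        (\<forall>t\<le>\<tau>. x v' i t \<le> r v' i t * v i t) \<longrightarrow>
        (\<Sum>t<T. r v i t * v i t - x v i t) + g v i
          \<ge> (\<Sum>t\<le>\<tau>. r v' i t * v i t - x v' i t) + x v' i \<tau>)"

definition revenue ::
  "nat \<Rightarrow> nat \<Rightarrow> (profile \<Rightarrow> nat \<Rightarrow> nat \<Rightarrow> real) \<Rightarrow> (profile \<Rightarrow> nat \<Rightarrow> real) \<Rightarrow> profile \<Rightarrow> real" where
  "revenue k T x g v = (\<Sum>i<k. \<Sum>t<T. x v i t) - (\<Sum>i<k. g v i)"

definition total_value :: "nat \<Rightarrow> profile \<Rightarrow> nat \<Rightarrow> real" where
  "total_value T v i = (\<Sum>t<T. v i t)"

definition rev_STB :: "nat \<Rightarrow> nat \<Rightarrow> profile \<Rightarrow> real" where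
  "rev_STB k T v = rev (sort (map (total_value T v) [0..<k])) ! 1"

definition competitive ::
  "nat \<Rightarrow> real \<Rightarrow> (nat \<Rightarrow> profile \<Rightarrow> nat \<Rightarrow> nat \<Rightarrow> real) \<Rightarrow> (nat \<Rightarrow> profile \<Rightarrow> nat \<Rightarrow> nat \<Rightarrow> real)
     \<Rightarrow> (nat \<Rightarrow> profile \<Rightarrow> nat \<Rightarrow> real) \<Rightarrow> bool" where
  "competitive k \<alpha> R X G \<longleftrightarrow>
     (\<exists>C. \<forall>T v. valid_profile k T v \<longrightarrow>
        revenue k T (X T) (G T) v \<ge> \<alpha> * rev_STB k T v - C)"

end

theory Submission
  imports Defs
begin

definition H :: "nat \<Rightarrow> real" where "H n = (\<Sum>z\<in>{1..n}. 1 / real z)"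

lemma H_0[simp]: "H 0 = 0" by (simp add: H_def)
lemma H_Suc: "H (Suc n) = H n + 1 / real (Suc n)"
  by (simp add: H_def)
lemma H_nonneg: "0 \<le> H n" unfolding H_def by (intro sum_nonneg) auto
lemma H_mono: "m \<le> n \<Longrightarrow> H m \<le> H n"
proof (induction n)
  case 0 then show ?case by simp
next
  case (Suc n)
  then show ?case
    by (cases "m = Suc n") (auto simp: H_Suc intro: order_trans[OF _ add_increasing2[of "1/real (Suc n)"]] simp del: of_nat_Suc)
qed
lemma H_ge1: "1 \<le> n \<Longrightarrow> 1 \<le> H n"
  using H_mono[of 1 n] by (simp add: H_def)
lemma H_pos: "0 < n \<Longrightarrow> 0 < H n" using H_ge1[of n] by simp
lemma H_ge_ln: "ln (real n + 1) \<le> H n"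
proof (induction n)
  case 0 then show ?case by simp
next
  case (Suc n)
  have e: "real (Suc n) + 1 = (real n + 1) * (1 + 1 / (real n + 1))"
    by (simp add: field_simps)
  have "ln (real (Suc n) + 1) = ln (real n + 1) + ln (1 + 1 / (real n + 1))"
    unfolding e by (rule ln_mult_pos) (auto simp: add_pos_pos intro: add_pos_nonneg)
  also have "ln (1 + 1 / (real n + 1)) \<le> 1 / (real n + 1)"
    by (rule ln_add_one_self_le_self) auto
  finally show ?case using Suc by (simp add: H_Suc add_ac)
qed

lemma H_diff_le: "m \<le> n \<Longrightarrow> H n - H m \<le> real (n - m) / real (m + 1)"
proof (induction n)
  case 0 then show ?case by simp
next
  case (Suc n)
  show ?case
  proof (cases "m = Suc n")
    case True then show ?thesis by simp
  next
    case False
    then have "m \<le> n" using Suc by simp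
    then have ih: "H n - H m \<le> real (n - m) / real (m + 1)" using Suc by simp
    have "1 / real (Suc n) \<le> 1 / real (m + 1)"
      using \<open>m \<le> n\<close> by (intro divide_left_mono) auto
    then have "H (Suc n) - H m \<le> real (n - m) / real (m + 1) + 1 / real (m + 1)"
      using ih by (simp add: H_Suc)
    also have "\<dots> = real (Suc n - m) / real (m + 1)"
      using \<open>m \<le> n\<close> by (simp add: Suc_diff_le add_divide_distrib[symmetric])
    finally show ?thesis .
  qed
qed

definition lam :: "nat \<Rightarrow> nat \<Rightarrow> nat \<Rightarrow> real" where
  "lam z0 D d = (if z0 \<le> d \<and> d < D then 1 / (real d * H d) else 0)"

definition bb :: "nat \<Rightarrow> nat \<Rightarrow> real" where
  "bb z0 z = (if z < z0 then 1 / real z else (H z - H (z - z0)) / (real z * H z))"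

lemma lam_term: assumes "2 \<le> d" shows "1 / (real d * H d) \<le> ln (H d) - ln (H (d - 1))"
proof -
  obtain m where d: "d = Suc m" and m: "1 \<le> m" using assms by (cases d) auto
  have Hm: "0 < H m" using H_pos[of m] m by simp
  have Hd: "H d = H m + 1 / real d" using d by (simp add: H_Suc)
  have Hdp: "0 < H d" using Hm unfolding Hd by (intro add_pos_nonneg) auto
  have "ln (H m / H d) \<le> H m / H d - 1" using Hm Hdp by (intro ln_le_minus_one) simp
  also have "H m / H d - 1 = (H m - H d) / H d"
    using Hdp by (simp add: field_simps)
  also have "H m - H d = - (1 / real d)" by (simp add: Hd)
  also have "- (1 / real d) / H d = - (1 / (real d * H d))" by simp
  finally have "ln (H m) - ln (H d) \<le> - (1 / (real d * H d))"
    using Hm Hdp by (simp add: ln_div)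
  then show ?thesis using d by simp
qed

lemma lam_sum_aux: assumes "2 \<le> z0" "z0 \<le> n"
  shows "(\<Sum>d\<in>{z0..<n}. 1 / (real d * H d)) \<le> ln (H (n - 1)) - ln (H (z0 - 1))"
  using assms(2)
proof (induction n rule: dec_induct)
  case base then show ?case by simp
next
  case (step n)
  have "(\<Sum>d\<in>{z0..<Suc n}. 1 / (real d * H d)) = (\<Sum>d\<in>{z0..<n}. 1 / (real d * H d)) + 1 / (real n * H n)"
    using step by simp
  also have "\<dots> \<le> (ln (H (n - 1)) - ln (H (z0 - 1))) + (ln (H n) - ln (H (n - 1)))"
    using step lam_term[of n] assms by (intro add_mono) auto
  finally show ?case by simp
qed

lemma lam_sum: assumes "2 \<le> z0" "z0 \<le> D" "H (D - 1) \<le> exp 1 * H (z0 - 1)"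
  shows "(\<Sum>d<D. lam z0 D d) \<le> 1"
proof -
  have "(\<Sum>d<D. lam z0 D d) = (\<Sum>d<D. if d \<in> {z0..<D} then 1 / (real d * H d) else 0)"
    by (intro sum.cong) (auto simp: lam_def)
  also have "\<dots> = (\<Sum>d\<in>{..<D} \<inter> {z0..<D}. 1 / (real d * H d))"
    by (rule sum.inter_restrict[symmetric]) simp
  also have "{..<D} \<inter> {z0..<D} = {z0..<D}" by auto
  also have "(\<Sum>d\<in>{z0..<D}. 1 / (real d * H d)) \<le> ln (H (D - 1)) - ln (H (z0 - 1))"
    by (rule lam_sum_aux) (use assms in auto)
  also have "\<dots> \<le> 1"
  proof -
    have p: "0 < H (z0 - 1)" using assms by (intro H_pos) auto
    have "0 < H (D - 1)" using assms by (intro H_pos) auto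
    then have "ln (H (D - 1)) \<le> ln (exp 1 * H (z0 - 1))" using assms(3) p by simp
    also have "\<dots> = 1 + ln (H (z0 - 1))" using p by (simp add: ln_mult)
    finally show ?thesis by simp
  qed
  finally show ?thesis .
qed

lemma sum_inv_shift: "z0 \<le> z \<Longrightarrow> (\<Sum>d\<in>{z0..<z}. 1 / real (z - d)) = H (z - z0)"
  unfolding H_def
  by (rule sum.reindex_bij_witness[of _ "\<lambda>i. z - i" "\<lambda>d. z - d"]) auto

lemma cb_lemma: assumes "1 \<le> z" "z \<le> D" "2 \<le> z0"
  shows "1 / real z - (\<Sum>d<D. if d < z then lam z0 D d * (1 / real (z - d) - 1 / real z) else 0) \<le> bb z0 z"
proof (cases "z < z0")
  case True
  then have "(\<Sum>d<D. if d < z then lam z0 D d * (1 / real (z - d) - 1 / real z) else 0) = 0"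
    by (intro sum.neutral) (auto simp: lam_def)
  then show ?thesis using True by (simp add: bb_def)
next
  case False
  have Hz: "0 < H z" using assms by (intro H_pos) auto
  have "(\<Sum>d<D. if d < z then lam z0 D d * (1 / real (z - d) - 1 / real z) else 0)
      = (\<Sum>d<D. if d \<in> {z0..<z} then 1 / (H d * real z * real (z - d)) else 0)"
  proof (intro sum.cong refl)
    fix d assume "d \<in> {..<D}"
    show "(if d < z then lam z0 D d * (1 / real (z - d) - 1 / real z) else 0)
        = (if d \<in> {z0..<z} then 1 / (H d * real z * real (z - d)) else 0)"
    proof (cases "z0 \<le> d \<and> d < z")
      case True
      then have "0 < d" "d < D" using assms by auto
      moreover have "0 < H d" using True assms by (intro H_pos) auto
      ultimately show ?thesis using True assms
        by (auto simp: lam_def field_simps of_nat_diff)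
    qed (auto simp: lam_def)
  qed
  also have "\<dots> = (\<Sum>d\<in>{..<D} \<inter> {z0..<z}. 1 / (H d * real z * real (z - d)))"
    by (rule sum.inter_restrict[symmetric]) simp
  also have "{..<D} \<inter> {z0..<z} = {z0..<z}" using assms by auto
  finally have eq: "(\<Sum>d<D. if d < z then lam z0 D d * (1 / real (z - d) - 1 / real z) else 0)
      = (\<Sum>d\<in>{z0..<z}. 1 / (H d * real z * real (z - d)))" .
  have "(\<Sum>d\<in>{z0..<z}. 1 / (H z * real z) * (1 / real (z - d))) \<le> (\<Sum>d\<in>{z0..<z}. 1 / (H d * real z * real (z - d)))"
  proof (intro sum_mono)
    fix d assume d: "d \<in> {z0..<z}"
    have Hd: "0 < H d" using d assms by (intro H_pos) auto
    have "H d \<le> H z" using d by (intro H_mono) auto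
    then have "1 / (H z * (real z * real (z - d))) \<le> 1 / (H d * (real z * real (z - d)))"
      using Hd d assms by (intro divide_left_mono mult_right_mono mult_pos_pos) auto
    then show "1 / (H z * real z) * (1 / real (z - d)) \<le> 1 / (H d * real z * real (z - d))"
      by (simp add: mult.assoc)
  qed
  also have "(\<Sum>d\<in>{z0..<z}. 1 / (H z * real z) * (1 / real (z - d))) = 1 / (H z * real z) * (\<Sum>d\<in>{z0..<z}. 1 / real (z - d))"
    by (rule sum_distrib_left[symmetric])
  also have "\<dots> = 1 / (H z * real z) * H (z - z0)"
    using False by (simp only: sum_inv_shift)
  finally have le: "1 / (H z * real z) * H (z - z0) \<le> (\<Sum>d<D. if d < z then lam z0 D d * (1 / real (z - d) - 1 / real z) else 0)"
    using eq by simp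
  have "1 / real z - (\<Sum>d<D. if d < z then lam z0 D d * (1 / real (z - d) - 1 / real z) else 0)
     \<le> 1 / real z - 1 / (H z * real z) * H (z - z0)"
    by (rule diff_left_mono[OF le])
  also have "1 / real z - 1 / (H z * real z) * H (z - z0) = (H z - H (z - z0)) / (real z * H z)"
    using Hz assms by (simp add: field_simps)
  finally have "1 / real z - (\<Sum>d<D. if d < z then lam z0 D d * (1 / real (z - d) - 1 / real z) else 0)
     \<le> (H z - H (z - z0)) / (real z * H z)" .
  then show ?thesis using False unfolding bb_def by simp
qed

lemma H_1[simp]: "H (Suc 0) = 1" by (simp add: H_def)

lemma tele: assumes "1 \<le> z0" "z0 \<le> n"
  shows "(\<Sum>z\<in>{z0..n}. 1 / real (z - z0 + 1) - 1 / real z) = H (z0 - 1) + H (n - z0 + 1) - H n"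
  using assms(2)
proof (induction n rule: dec_induct)
  case base
  have "H z0 = H (z0 - 1) + 1 / real z0" using assms H_Suc[of "z0 - 1"] by simp
  then show ?case by simp
next
  case (step n)
  have e: "Suc n - z0 + 1 = Suc (n - z0 + 1)" using step by simp
  have "(\<Sum>z\<in>{z0..Suc n}. 1 / real (z - z0 + 1) - 1 / real z)
      = (\<Sum>z\<in>{z0..n}. 1 / real (z - z0 + 1) - 1 / real z) + (1 / real (Suc n - z0 + 1) - 1 / real (Suc n))"
    using step by (simp add: sum.cl_ivl_Suc)
  also have "\<dots> = H (z0 - 1) + H (Suc n - z0 + 1) - H (Suc n)"
    unfolding step.IH e H_Suc[of "n - z0 + 1"] H_Suc[of n] by simp
  finally show ?case .
qed

lemma bb_point: assumes "2 \<le> z0" "z0 \<le> z"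
  shows "bb z0 z \<le> 2 / H z0 * (1 / real (z - z0 + 1) - 1 / real z)"
proof -
  have h0: "0 < H z0" using assms by (intro H_pos) auto
  have hz: "H z0 \<le> H z" using assms by (intro H_mono)
  have num0: "0 \<le> H z - H (z - z0)" using H_mono[of "z - z0" z] by simp
  have num: "H z - H (z - z0) \<le> real z0 / real (z - z0 + 1)"
    using H_diff_le[of "z - z0" z] assms by simp
  have zp: "0 < real z" using assms by simp
  have "bb z0 z = (H z - H (z - z0)) / (real z * H z)" using assms by (simp add: bb_def)
  also have "\<dots> \<le> (H z - H (z - z0)) / (real z * H z0)"
    using num0 h0 hz zp by (intro divide_left_mono mult_left_mono mult_pos_pos) auto
  also have "\<dots> \<le> (real z0 / real (z - z0 + 1)) / (real z * H z0)"
    using num h0 zp by (intro divide_right_mono) auto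
  also have "\<dots> \<le> 2 / H z0 * (1 / real (z - z0 + 1) - 1 / real z)"
  proof -
    define a where "a = real z"
    define c where "c = real z0"
    define h where "h = H z0"
    have r: "real (z - z0 + 1) = a - c + 1" using assms by (simp add: a_def c_def of_nat_diff)
    have c2: "2 \<le> c" using assms by (simp add: c_def)
    have ac: "c \<le> a" using assms by (simp add: a_def c_def)
    have hp: "0 < h" using h0 by (simp add: h_def)
    have p1: "0 < a - c + 1" using ac by simp
    have p2: "0 < a" using ac c2 by simp
    have e1: "(c / (a - c + 1)) / (a * h) = c / ((a - c + 1) * a * h)" by simp
    have e2: "2 / h * (1 / (a - c + 1) - 1 / a) = (2 * (c - 1)) / ((a - c + 1) * a * h)"
      using p1 p2 hp by (simp add: field_simps)
    have "c / ((a - c + 1) * a * h) \<le> (2 * (c - 1)) / ((a - c + 1) * a * h)"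
      using c2 p1 p2 hp by (intro divide_right_mono) auto
    then have "(c / (a - c + 1)) / (a * h) \<le> 2 / h * (1 / (a - c + 1) - 1 / a)"
      unfolding e1 e2 .
    then show ?thesis unfolding r a_def[symmetric] c_def[symmetric] h_def[symmetric] by simp
  qed
  finally show ?thesis .
qed

lemma bb_nonneg: "0 \<le> bb z0 z"
  unfolding bb_def using H_mono[of "z - z0" z] H_nonneg[of z] by (auto intro: divide_nonneg_nonneg)

lemma bb_sum: assumes "2 \<le> z0" "z0 \<le> D"
  shows "(\<Sum>z\<in>{1..D}. bb z0 z) \<le> H (z0 - 1) + 2"
proof -
  have split: "{1..D} = {1..<z0} \<union> {z0..D}" using assms by auto
  have "(\<Sum>z\<in>{1..D}. bb z0 z) = (\<Sum>z\<in>{1..<z0}. bb z0 z) + (\<Sum>z\<in>{z0..D}. bb z0 z)"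
    unfolding split by (rule sum.union_disjoint) auto
  also have "(\<Sum>z\<in>{1..<z0}. bb z0 z) = H (z0 - 1)"
  proof -
    have "{1..<z0} = {1..z0 - 1}" using assms by auto
    then show ?thesis unfolding H_def by (intro sum.cong) (auto simp: bb_def)
  qed
  also have "(\<Sum>z\<in>{z0..D}. bb z0 z) \<le> (\<Sum>z\<in>{z0..D}. 2 / H z0 * (1 / real (z - z0 + 1) - 1 / real z))"
    using assms by (intro sum_mono bb_point) auto
  also have "\<dots> = 2 / H z0 * (\<Sum>z\<in>{z0..D}. 1 / real (z - z0 + 1) - 1 / real z)"
    by (rule sum_distrib_left[symmetric])
  also have "\<dots> = 2 / H z0 * (H (z0 - 1) + H (D - z0 + 1) - H D)"
    using tele[of z0 D] assms by simp
  also have "\<dots> \<le> 2 / H z0 * H (z0 - 1)"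
    using H_mono[of "D - z0 + 1" D] assms H_pos[of z0] by (intro mult_left_mono) auto
  also have "\<dots> \<le> 2"
  proof -
    have "H (z0 - 1) \<le> H z0" by (intro H_mono) auto
    moreover have "0 < H z0" using assms by (intro H_pos) auto
    ultimately show ?thesis by (simp add: field_simps)
  qed
  finally show ?thesis by simp
qed

lemma choose_z0: assumes "2 \<le> D"
  shows "\<exists>z0. 2 \<le> z0 \<and> z0 \<le> D \<and> H (D - 1) \<le> exp 1 * H (z0 - 1) \<and> H (z0 - 1) \<le> H (D - 1) / exp 1 + 1"
proof -
  define P where "P n \<longleftrightarrow> H (D - 1) \<le> exp 1 * H n" for n
  have PD: "P (D - 1)"
  proof -
    have "1 * H (D - 1) \<le> exp 1 * H (D - 1)"
      using H_nonneg[of "D - 1"] by (intro mult_right_mono) auto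
    then show ?thesis by (simp add: P_def)
  qed
  define n where "n = (LEAST n. P n)"
  have Pn: "P n" unfolding n_def using PD by (rule LeastI)
  have nle: "n \<le> D - 1" unfolding n_def using PD by (rule Least_le)
  have "n \<noteq> 0"
  proof
    assume "n = 0"
    then have "H (D - 1) \<le> 0" using Pn by (simp add: P_def)
    moreover have "0 < H (D - 1)" using assms by (intro H_pos) auto
    ultimately show False by simp
  qed
  then obtain m where nm: "n = Suc m" by (cases n) auto
  have "\<not> P m" unfolding n_def by (rule not_less_Least) (use nm n_def in simp)
  then have "exp 1 * H m < H (D - 1)" by (simp add: P_def)
  then have "H m < H (D - 1) / exp 1" by (simp add: field_simps)
  moreover have "H n \<le> H m + 1" unfolding nm H_Suc by simp
  ultimately have "H n \<le> H (D - 1) / exp 1 + 1" by simp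
  then show ?thesis using Pn nle assms by (intro exI[of _ "Suc n"]) (auto simp: P_def nm)
qed

lemma analytic: assumes "2 \<le> D"
  shows "\<exists>l b. (\<forall>d. 0 \<le> l d) \<and> l 0 = 0 \<and> (\<Sum>d<D. l d) \<le> 1 \<and>
     (\<forall>z. 1 \<le> z \<and> z \<le> D \<longrightarrow> 1 / real z - (\<Sum>d<D. if d < z then l d * (1 / real (z - d) - 1 / real z) else 0) \<le> b z)
     \<and> (\<forall>z. 0 \<le> b z) \<and> (\<Sum>z\<in>{1..D}. b z) \<le> H D / exp 1 + 3"
proof -
  obtain z0 where z0: "2 \<le> z0" "z0 \<le> D" "H (D - 1) \<le> exp 1 * H (z0 - 1)" "H (z0 - 1) \<le> H (D - 1) / exp 1 + 1"
    using choose_z0[OF assms] by blast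
  have "(\<Sum>z\<in>{1..D}. bb z0 z) \<le> H (z0 - 1) + 2" using z0 by (intro bb_sum)
  also have "\<dots> \<le> H (D - 1) / exp 1 + 3" using z0 by simp
  also have "\<dots> \<le> H D / exp 1 + 3" using H_mono[of "D - 1" D] by (simp add: divide_right_mono)
  finally have s: "(\<Sum>z\<in>{1..D}. bb z0 z) \<le> H D / exp 1 + 3" .
  show ?thesis
    apply (rule exI[of _ "lam z0 D"], rule exI[of _ "bb z0"])
    using z0 s lam_sum[of z0 D] cb_lemma[of _ D z0] bb_nonneg[of z0]
    by (auto simp: lam_def intro!: divide_nonneg_nonneg mult_nonneg_nonneg H_nonneg)
qed

definition wv :: "nat \<Rightarrow> nat \<Rightarrow> nat \<Rightarrow> real" where
  "wv D a t = (if a \<le> t \<and> t < a + D then 1 / real (a + D - t) else 0)"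

lemma wv_nonneg: "0 \<le> wv D a t" by (simp add: wv_def)
lemma wv_le1: "wv D a t \<le> 1" by (auto simp: wv_def divide_le_eq)

lemma wv_mono: assumes "a \<le> a'" "t < a + D" shows "wv D a' t \<le> wv D a t"
proof (cases "a' \<le> t")
  case True
  then have "a \<le> t" using assms by simp
  moreover have "t < a' + D" using assms by simp
  moreover have "real (a + D - t) \<le> real (a' + D - t)" using assms True by simp
  moreover have "0 < real (a + D - t)" using assms by simp
  ultimately show ?thesis using True assms by (simp add: wv_def frac_le)
next
  case False then show ?thesis by (simp add: wv_def)
qed

lemma window_sum: fixes a D T :: nat and f :: "nat \<Rightarrow> real" assumes "a + D \<le> T"
  shows "(\<Sum>t<T. if a \<le> t \<and> t < a + D then f (a + D - t) else 0) = (\<Sum>z\<in>{1..D}. f z)"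
proof -
  have "(\<Sum>t<T. if a \<le> t \<and> t < a + D then f (a + D - t) else 0) = (\<Sum>t\<in>{t\<in>{..<T}. a \<le> t \<and> t < a + D}. f (a + D - t))"
    by (rule sum.inter_filter[symmetric]) simp
  also have "\<dots> = (\<Sum>z\<in>{1..D}. f z)"
    by (rule sum.reindex_bij_witness[of _ "\<lambda>z. a + D - z" "\<lambda>t. a + D - t"]) (use assms in auto)
  finally show ?thesis .
qed

lemma wv_sum: assumes "a + D \<le> T" shows "(\<Sum>t<T. wv D a t) = H D"
  unfolding wv_def H_def using window_sum[OF assms, of "\<lambda>z. 1 / real z"] by simp

lemma shift_sum: fixes K d :: nat shows "(\<Sum>a<K. if a + d < K then F a (a + d) else 0) = (\<Sum>a'<K. if d \<le> a' then F (a' - d) a' else (0::real))"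
proof -
  have "(\<Sum>a<K. if a + d < K then F a (a + d) else 0) = (\<Sum>a\<in>{a\<in>{..<K}. a + d < K}. F a (a + d))"
    by (rule sum.inter_filter[symmetric]) simp
  also have "\<dots> = (\<Sum>a'\<in>{a'\<in>{..<K}. d \<le> a'}. F (a' - d) a')"
    by (rule sum.reindex_bij_witness[of _ "\<lambda>a'. a' - d" "\<lambda>a. a + d"]) auto
  also have "\<dots> = (\<Sum>a'<K. if d \<le> a' then F (a' - d) a' else 0)"
    by (rule sum.inter_filter) simp
  finally show ?thesis .
qed

lemma single_bidder:
  fixes r x :: "nat \<Rightarrow> nat \<Rightarrow> real" and g l b :: "nat \<Rightarrow> real" and K D T :: nat
  assumes TD: "T = K + D" and D2: "2 \<le> D"
    and rb: "\<And>a t. a < K \<Longrightarrow> t < T \<Longrightarrow> 0 \<le> r a t \<and> r a t \<le> 1"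
    and IR: "\<And>a t. a < K \<Longrightarrow> t < T \<Longrightarrow> x a t \<le> r a t * wv D a t"
    and dev: "\<And>a a' \<tau>. a < K \<Longrightarrow> a' < K \<Longrightarrow> \<tau> < T \<Longrightarrow> (\<forall>t\<le>\<tau>. x a' t \<le> r a' t * wv D a t) \<Longrightarrow>
        (\<Sum>t\<le>\<tau>. r a' t * wv D a t - x a' t) + x a' \<tau> \<le> (\<Sum>t<T. r a t * wv D a t - x a t) + g a"
    and lpos: "\<forall>d. 0 \<le> l d" and l0: "l 0 = 0" and lsum: "(\<Sum>d<D. l d) \<le> 1"
    and cb: "\<forall>z. 1 \<le> z \<and> z \<le> D \<longrightarrow> 1 / real z - (\<Sum>d<D. if d < z then l d * (1 / real (z - d) - 1 / real z) else 0) \<le> b z"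
    and bpos: "\<forall>z. 0 \<le> b z"
  shows "(\<Sum>a<K. (\<Sum>t<T. x a t) - g a) \<le> real D * H D + real K * (\<Sum>z\<in>{1..D}. b z)"
proof -
  define w where "w = wv D"
  define U where "U a = (\<Sum>t<T. r a t * w a t - x a t) + g a" for a
  define G where "G a a' = (\<Sum>t<T. if t < a + D then r a' t * (w a t - w a' t) else 0)" for a a'
  define S where "S = (\<Sum>z\<in>{1..D}. b z)"
  define W where "W a = (\<Sum>t<T. r a t * w a t)" for a
  have w0: "0 \<le> w a t" for a t by (simp add: w_def wv_nonneg)
  have wmono: "a \<le> a' \<Longrightarrow> t < a + D \<Longrightarrow> w a' t \<le> w a t" for a a' t
    by (simp add: w_def wv_mono)
  have T0: "0 < T" using TD D2 by simp
  have U0: "0 \<le> U a" if a: "a < K" for a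
  proof -
    have "(\<Sum>t\<le>0. r a t * w a t - x a t) + x a 0 \<le> U a"
      unfolding U_def w_def using dev[OF a a T0] IR[OF a T0] by simp
    moreover have "0 \<le> r a 0 * w a 0" using rb[OF a T0] w0 by simp
    ultimately show ?thesis by simp
  qed
  have Gnn: "0 \<le> G a a'" if "a \<le> a'" "a' < K" for a a'
    unfolding G_def using that rb wmono
    by (intro sum_nonneg) (auto intro!: mult_nonneg_nonneg)
  have UG: "G a a' \<le> U a" if aa: "a < a'" "a' < K" for a a'
  proof -
    define \<tau> where "\<tau> = a + D - 1"
    have a: "a < K" using aa by simp
    have tT: "\<tau> < T" using aa TD D2 by (simp add: \<tau>_def)
    have cond: "\<forall>t\<le>\<tau>. x a' t \<le> r a' t * wv D a t"
    proof (intro allI impI)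
      fix t assume t: "t \<le> \<tau>"
      then have "t < T" using tT by simp
      then have "x a' t \<le> r a' t * w a' t" using IR[OF aa(2)] by (simp add: w_def)
      also have "\<dots> \<le> r a' t * w a t"
        using rb[OF aa(2) \<open>t < T\<close>] wmono[of a a' t] t aa D2 by (intro mult_left_mono) (auto simp: \<tau>_def)
      finally show "x a' t \<le> r a' t * wv D a t" by (simp add: w_def)
    qed
    have L: "(\<Sum>t\<le>\<tau>. r a' t * w a t - x a' t) + x a' \<tau> \<le> U a"
      using dev[OF a aa(2) tT cond] by (simp add: U_def w_def)
    have Geq: "G a a' = (\<Sum>t\<le>\<tau>. r a' t * (w a t - w a' t))"
    proof -
      have "G a a' = (\<Sum>t\<in>{t\<in>{..<T}. t < a + D}. r a' t * (w a t - w a' t))"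
        unfolding G_def by (rule sum.inter_filter[symmetric]) simp
      also have "{t\<in>{..<T}. t < a + D} = {..\<tau>}" using TD aa D2 by (auto simp: \<tau>_def)
      finally show ?thesis .
    qed
    have split: "(\<Sum>t\<le>\<tau>. r a' t * w a t - x a' t) = (\<Sum>t\<le>\<tau>. r a' t * (w a t - w a' t)) + (\<Sum>t\<le>\<tau>. r a' t * w a' t - x a' t)"
      by (simp add: sum.distrib[symmetric] algebra_simps)
    have "r a' \<tau> * w a' \<tau> - x a' \<tau> \<le> (\<Sum>t\<le>\<tau>. r a' t * w a' t - x a' t)"
    proof (rule member_le_sum)
      fix t assume "t \<in> {..\<tau>} - {\<tau>}"
      then have "t < T" using tT by simp
      then show "0 \<le> r a' t * w a' t - x a' t" using IR[OF aa(2)] by (simp add: w_def)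
    qed auto
    moreover have "0 \<le> r a' \<tau> * w a' \<tau>" using rb[OF aa(2) tT] w0 by simp
    ultimately have "G a a' \<le> (\<Sum>t\<le>\<tau>. r a' t * w a t - x a' t) + x a' \<tau>"
      unfolding Geq split by simp
    then show ?thesis using L by simp
  qed
  have Ul: "(\<Sum>d<D. l d * (if a + d < K then G a (a + d) else 0)) \<le> U a" if a: "a < K" for a
  proof -
    have "(\<Sum>d<D. l d * (if a + d < K then G a (a + d) else 0)) \<le> (\<Sum>d<D. l d * U a)"
    proof (intro sum_mono mult_left_mono)
      fix d assume "d \<in> {..<D}"
      show "(if a + d < K then G a (a + d) else 0) \<le> U a"
      proof (cases "a + d < K")
        case True
        show ?thesis
        proof (cases "d = 0")
          case True
          have "G a a = 0" unfolding G_def by (intro sum.neutral) simp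
          then show ?thesis using True U0[OF a] by simp
        next
          case False then show ?thesis using UG[of a "a + d"] \<open>a + d < K\<close> by simp
        qed
      next
        case False then show ?thesis using U0[OF a] by simp
      qed
    qed (use lpos in auto)
    also have "\<dots> = (\<Sum>d<D. l d) * U a" by (simp add: sum_distrib_right)
    also have "\<dots> \<le> 1 * U a" using lsum U0[OF a] by (intro mult_right_mono) auto
    finally show ?thesis by simp
  qed
  have Rev: "(\<Sum>t<T. x a t) - g a = W a - U a" for a
    by (simp add: W_def U_def sum_subtractf)
  have step1: "(\<Sum>a<K. (\<Sum>t<T. x a t) - g a) \<le> (\<Sum>a<K. W a - (\<Sum>d<D. l d * (if a + d < K then G a (a + d) else 0)))"
    unfolding Rev using Ul by (intro sum_mono) (auto simp: algebra_simps)
  have swap: "(\<Sum>a<K. (\<Sum>d<D. l d * (if a + d < K then G a (a + d) else 0)))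
      = (\<Sum>a'<K. (\<Sum>d<D. l d * (if d \<le> a' then G (a' - d) a' else 0)))"
  proof -
    have "(\<Sum>a<K. (\<Sum>d<D. l d * (if a + d < K then G a (a + d) else 0)))
        = (\<Sum>d<D. l d * (\<Sum>a<K. if a + d < K then G a (a + d) else 0))"
      by (subst sum.swap) (simp add: sum_distrib_left)
    also have "\<dots> = (\<Sum>d<D. l d * (\<Sum>a'<K. if d \<le> a' then G (a' - d) a' else 0))"
      by (simp only: shift_sum)
    also have "\<dots> = (\<Sum>a'<K. (\<Sum>d<D. l d * (if d \<le> a' then G (a' - d) a' else 0)))"
      by (subst sum.swap) (simp add: sum_distrib_left)
    finally show ?thesis .
  qed
  have per: "W a' - (\<Sum>d<D. l d * (if d \<le> a' then G (a' - d) a' else 0)) \<le> (if D \<le> a' + 1 then S else H D)"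
    if a': "a' < K" for a'
  proof (cases "D \<le> a' + 1")
    case False
    have "0 \<le> (\<Sum>d<D. l d * (if d \<le> a' then G (a' - d) a' else 0))"
      using lpos Gnn a' by (intro sum_nonneg mult_nonneg_nonneg) auto
    moreover have "W a' \<le> (\<Sum>t<T. w a' t)"
      unfolding W_def using rb[OF a'] w0 by (intro sum_mono) (auto intro: mult_left_le_one_le)
    moreover have "(\<Sum>t<T. w a' t) = H D" unfolding w_def using a' TD by (intro wv_sum) simp
    ultimately show ?thesis using False by simp
  next
    case True
    define coef where "coef t = w a' t - (\<Sum>d<D. l d * (if t < a' - d + D then w (a' - d) t - w a' t else 0))" for t
    define bt where "bt t = (if a' \<le> t \<and> t < a' + D then b (a' + D - t) else 0)" for t
    have eq: "W a' - (\<Sum>d<D. l d * (if d \<le> a' then G (a' - d) a' else 0)) = (\<Sum>t<T. r a' t * coef t)"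
    proof -
      have "(\<Sum>d<D. l d * (if d \<le> a' then G (a' - d) a' else 0)) = (\<Sum>d<D. l d * G (a' - d) a')"
        using True by (intro sum.cong) auto
      also have "\<dots> = (\<Sum>d<D. (\<Sum>t<T. r a' t * (l d * (if t < a' - d + D then w (a' - d) t - w a' t else 0))))"
        unfolding G_def sum_distrib_left by (intro sum.cong refl) auto
      also have "\<dots> = (\<Sum>t<T. r a' t * (\<Sum>d<D. l d * (if t < a' - d + D then w (a' - d) t - w a' t else 0)))"
        by (subst sum.swap) (simp add: sum_distrib_left)
      finally show ?thesis
        unfolding W_def coef_def by (simp add: sum_subtractf[symmetric] algebra_simps)
    qed
    have cle: "coef t \<le> bt t" if t: "t < T" for t
    proof -
      consider "t < a'" | "a' + D \<le> t" | "a' \<le> t \<and> t < a' + D" by linarith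
      then show ?thesis
      proof cases
        case 1
        have "w a' t = 0" using 1 by (simp add: w_def wv_def)
        moreover have "0 \<le> (\<Sum>d<D. l d * (if t < a' - d + D then w (a' - d) t - w a' t else 0))"
          using lpos w0 \<open>w a' t = 0\<close> by (intro sum_nonneg mult_nonneg_nonneg) auto
        ultimately show ?thesis using 1 by (simp add: coef_def bt_def)
      next
        case 2
        have "w a' t = 0" using 2 by (simp add: w_def wv_def)
        moreover have "(\<Sum>d<D. l d * (if t < a' - d + D then w (a' - d) t - w a' t else 0)) = 0"
          using 2 by (intro sum.neutral) auto
        ultimately show ?thesis using 2 by (simp add: coef_def bt_def)
      next
        case 3
        define z where "z = a' + D - t"
        have z: "1 \<le> z" "z \<le> D" using 3 by (auto simp: z_def)
        have wa: "w a' t = 1 / real z" using 3 by (simp add: w_def wv_def z_def)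
        have "(\<Sum>d<D. l d * (if t < a' - d + D then w (a' - d) t - w a' t else 0))
            = (\<Sum>d<D. if d < z then l d * (1 / real (z - d) - 1 / real z) else 0)"
        proof (intro sum.cong refl)
          fix d assume d: "d \<in> {..<D}"
          then have da: "d \<le> a'" using True by simp
          have iff: "t < a' - d + D \<longleftrightarrow> d < z" using da 3 by (auto simp: z_def)
          show "l d * (if t < a' - d + D then w (a' - d) t - w a' t else 0)
              = (if d < z then l d * (1 / real (z - d) - 1 / real z) else 0)"
          proof (cases "d < z")
            case True
            have c1: "a' - d \<le> t" using da 3 by linarith
            have c2: "t < a' - d + D" using True da 3 by (simp add: z_def)
            have c3: "a' - d + D - t = z - d" using da 3 by (simp add: z_def)
            have "w (a' - d) t = 1 / real (z - d)"
              unfolding w_def wv_def using c1 c2 c3 by simp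
            then show ?thesis using True iff wa by simp
          next
            case False then show ?thesis using iff by simp
          qed
        qed
        then have "coef t = 1 / real z - (\<Sum>d<D. if d < z then l d * (1 / real (z - d) - 1 / real z) else 0)"
          by (simp add: coef_def wa)
        also have "\<dots> \<le> b z" using cb z by blast
        finally show ?thesis using 3 by (simp add: bt_def z_def)
      qed
    qed
    have "(\<Sum>t<T. r a' t * coef t) \<le> (\<Sum>t<T. bt t)"
    proof (intro sum_mono)
      fix t assume "t \<in> {..<T}"
      then have t: "t < T" by simp
      have bt0: "0 \<le> bt t" using bpos by (simp add: bt_def)
      have "r a' t * coef t \<le> r a' t * bt t" using rb[OF a' t] cle[OF t] by (intro mult_left_mono) auto
      also have "\<dots> \<le> bt t" using rb[OF a' t] bt0 by (intro mult_left_le_one_le) auto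
      finally show "r a' t * coef t \<le> bt t" .
    qed
    also have "(\<Sum>t<T. bt t) = S" unfolding bt_def S_def using a' TD by (intro window_sum) simp
    finally show ?thesis using eq True by simp
  qed
  have "(\<Sum>a<K. (\<Sum>t<T. x a t) - g a) \<le> (\<Sum>a'<K. W a' - (\<Sum>d<D. l d * (if d \<le> a' then G (a' - d) a' else 0)))"
    using step1 swap by (simp add: sum_subtractf)
  also have "\<dots> \<le> (\<Sum>a'<K. if D \<le> a' + 1 then S else H D)"
    using per by (intro sum_mono) auto
  also have "\<dots> \<le> (\<Sum>a'<K. S + (if a' < D then H D else 0))"
  proof (intro sum_mono)
    fix a' assume "a' \<in> {..<K}"
    have S0: "0 \<le> S" unfolding S_def using bpos by (intro sum_nonneg) auto
    show "(if D \<le> a' + 1 then S else H D) \<le> S + (if a' < D then H D else 0)"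
      using S0 H_nonneg[of D] by auto
  qed
  also have "\<dots> = real K * S + (\<Sum>a'<K. if a' < D then H D else 0)"
    by (simp add: sum.distrib)
  also have "(\<Sum>a'<K. if a' < D then H D else 0) \<le> real D * H D"
  proof -
    have "(\<Sum>a'<K. if a' < D then H D else 0) = (\<Sum>a'\<in>{..<K} \<inter> {..<D}. H D)"
      by (subst sum.inter_restrict) auto
    also have "\<dots> = real (card ({..<K} \<inter> {..<D})) * H D" by simp
    also have "\<dots> \<le> real D * H D"
    proof -
      have "card ({..<K} \<inter> {..<D}) \<le> D" using card_mono[of "{..<D}" "{..<K} \<inter> {..<D}"] by auto
      then show ?thesis using H_nonneg[of D] by (simp add: mult_right_mono)
    qed
    finally show ?thesis .
  qed
  finally show ?thesis unfolding S_def by simp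
qed

definition prof :: "nat \<Rightarrow> nat \<Rightarrow> nat \<Rightarrow> profile" where
  "prof D a c = (\<lambda>i t. if i = 0 then wv D a t else if i = 1 then wv D c t else 0)"

lemma prof_valid: assumes "2 \<le> k" "a + D \<le> T" "c + D \<le> T"
  shows "valid_profile k T (prof D a c)"
  unfolding valid_profile_def
proof (intro allI conjI impI)
  fix i t
  show "0 \<le> prof D a c i t" by (simp add: prof_def wv_nonneg)
  show "prof D a c i t \<le> 1" by (simp add: prof_def wv_le1)
  assume "\<not> (i < k \<and> t < T)"
  then show "prof D a c i t = 0" using assms by (auto simp: prof_def wv_def)
qed

lemma prof_STB: assumes "2 \<le> k" "a + D \<le> T" "c + D \<le> T" "0 < D"
  shows "rev_STB k T (prof D a c) = H D"
proof -
  have tv0: "total_value T (prof D a c) 0 = H D"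
    unfolding total_value_def prof_def using wv_sum[OF assms(2)] by simp
  have tv1: "total_value T (prof D a c) 1 = H D"
    unfolding total_value_def prof_def using wv_sum[OF assms(3)] by simp
  have tvi: "total_value T (prof D a c) i = 0" if "2 \<le> i" for i
    unfolding total_value_def prof_def using that by simp
  have up: "[0..<k] = 0 # 1 # [2..<k]" using assms(1) by (simp add: upt_conv_Cons numeral_2_eq_2)
  have mr: "map (total_value T (prof D a c)) [2..<k] = replicate (k - 2) 0"
    by (rule nth_equalityI) (auto simp: tvi)
  have m: "map (total_value T (prof D a c)) [0..<k] = H D # H D # replicate (k - 2) 0"
    unfolding up using tv0 tv1 mr by simp
  have hp: "0 < H D" using assms by (intro H_pos) auto
  have ins: "insort (H D) (replicate n 0 @ ys) = replicate n 0 @ insort (H D) ys" for n ys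
    using hp by (induction n) auto
  have s: "sort (H D # H D # replicate (k - 2) 0) = replicate (k - 2) 0 @ [H D, H D]"
  proof -
    have "sort (replicate (k - 2) (0::real)) = replicate (k - 2) 0" by (rule sorted_sort_id) simp
    then have "sort (H D # H D # replicate (k - 2) 0) = insort (H D) (insort (H D) (replicate (k - 2) 0 @ []))"
      by simp
    also have "\<dots> = replicate (k - 2) 0 @ [H D, H D]" unfolding ins by (simp add: ins)
    finally show ?thesis .
  qed
  show ?thesis unfolding rev_STB_def m s by (simp add: nth_append)
qed

theorem corollary11:
  fixes k :: nat and \<alpha> :: real
  assumes "k \<ge> 2" and "\<alpha> > 2 / exp 1"
  shows "\<not> (\<exists>R X G. (\<forall>T. feasible_mech k T (R T) \<and> truthful k T (R T) (X T) (G T))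
                  \<and> competitive k \<alpha> R X G)"
proof
  assume "\<exists>R X G. (\<forall>T. feasible_mech k T (R T) \<and> truthful k T (R T) (X T) (G T)) \<and> competitive k \<alpha> R X G"
  then obtain R X G where mech: "\<And>T. feasible_mech k T (R T) \<and> truthful k T (R T) (X T) (G T)"
    and comp: "competitive k \<alpha> R X G" by blast
  obtain C where Cb: "\<And>T v. valid_profile k T v \<Longrightarrow> revenue k T (X T) (G T) v \<ge> \<alpha> * rev_STB k T v - C"
    using comp unfolding competitive_def by blast
  define \<delta> where "\<delta> = \<alpha> - 2 / exp 1"
  have \<delta>: "0 < \<delta>" using assms by (simp add: \<delta>_def)
  define m :: nat where "m = nat \<lceil>4 / \<delta>\<rceil> + 1"
  have m1: "1 \<le> m" by (simp add: m_def)
  have mge: "4 / \<delta> \<le> real m" unfolding m_def by linarith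
  have mq: "2 / real m \<le> \<delta> / 2"
  proof -
    have "0 < real m" using m1 by simp
    then show ?thesis using mge \<delta> by (simp add: field_simps)
  qed
  define X0 where "X0 = 2 * (\<bar>C\<bar> + 6) / \<delta>"
  define D :: nat where "D = max 2 (nat \<lceil>exp X0\<rceil>)"
  have D2: "2 \<le> D" by (simp add: D_def)
  have HD: "X0 < H D"
  proof -
    have "exp X0 \<le> real D" unfolding D_def by linarith
    then have "exp X0 < real D + 1" by simp
    then have "X0 < ln (real D + 1)" by (metis ln_exp ln_less_cancel_iff exp_gt_zero add_pos_pos less_trans)
    then show ?thesis using H_ge_ln[of D] by simp
  qed
  have key: "\<delta> / 2 * H D > C + 6"
  proof -
    have "\<delta> / 2 * X0 = \<bar>C\<bar> + 6" using \<delta> by (simp add: X0_def field_simps)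
    moreover have "\<delta> / 2 * X0 < \<delta> / 2 * H D" using HD \<delta> by simp
    ultimately show ?thesis by simp
  qed
  define K where "K = m * D"
  define T where "T = K + D"
  have K0: "0 < K" using m1 D2 by (simp add: K_def)
  obtain l b where lb: "\<forall>d. 0 \<le> l d" "l 0 = 0" "(\<Sum>d<D. l d) \<le> 1"
    "\<forall>z. 1 \<le> z \<and> z \<le> D \<longrightarrow> 1 / real z - (\<Sum>d<D. if d < z then l d * (1 / real (z - d) - 1 / real z) else 0) \<le> b z"
    "\<forall>z. 0 \<le> b z" "(\<Sum>z\<in>{1..D}. b z) \<le> H D / exp 1 + 3"
    using analytic[OF D2] by blast
  define B where "B = real D * H D + real K * (\<Sum>z\<in>{1..D}. b z)"
  have feas: "feasible_mech k T (R T)" and tr: "truthful k T (R T) (X T) (G T)" using mech by auto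
  have valid: "valid_profile k T (prof D a c)" if "a < K" "c < K" for a c
    using that assms(1) by (intro prof_valid) (auto simp: T_def)
  have IR: "\<And>v i t. valid_profile k T v \<Longrightarrow> i < k \<Longrightarrow> t < T \<Longrightarrow> X T v i t \<le> R T v i t * v i t"
    using tr unfolding truthful_def by blast
  have DEV: "\<And>v v' i \<tau>. valid_profile k T v \<Longrightarrow> valid_profile k T v' \<Longrightarrow> i < k \<Longrightarrow>
        differ_only_in i v v' \<Longrightarrow> \<tau> < T \<Longrightarrow> (\<forall>t\<le>\<tau>. X T v' i t \<le> R T v' i t * v i t) \<Longrightarrow>
        (\<Sum>t<T. R T v i t * v i t - X T v i t) + G T v i \<ge> (\<Sum>t\<le>\<tau>. R T v' i t * v i t - X T v' i t) + X T v' i \<tau>"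
    using tr unfolding truthful_def by blast
  have RB: "\<And>v i t. valid_profile k T v \<Longrightarrow> i < k \<Longrightarrow> t < T \<Longrightarrow> 0 \<le> R T v i t \<and> R T v i t \<le> 1"
    using feas unfolding feasible_mech_def by blast
  have k0: "0 < k" and k1: "1 < k" using assms(1) by auto
  have T0: "0 < T" using D2 by (simp add: T_def)
  have bid0: "(\<Sum>a<K. (\<Sum>t<T. X T (prof D a c) 0 t) - G T (prof D a c) 0) \<le> B" if c: "c < K" for c
    unfolding B_def
  proof (rule single_bidder[where r = "\<lambda>a t. R T (prof D a c) 0 t" and l = l and b = b])
    show "T = K + D" by (simp add: T_def)
    show "2 \<le> D" by (rule D2)
    show "\<And>a t. a < K \<Longrightarrow> t < T \<Longrightarrow> 0 \<le> R T (prof D a c) 0 t \<and> R T (prof D a c) 0 t \<le> 1"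
      using RB valid c k0 by blast
    show "X T (prof D a c) 0 t \<le> R T (prof D a c) 0 t * wv D a t" if "a < K" "t < T" for a t
    proof -
      have "X T (prof D a c) 0 t \<le> R T (prof D a c) 0 t * prof D a c 0 t"
        using IR[OF valid[OF that(1) c] k0 that(2)] .
      then show ?thesis by (simp add: prof_def)
    qed
    show "\<And>a a' \<tau>. a < K \<Longrightarrow> a' < K \<Longrightarrow> \<tau> < T \<Longrightarrow> (\<forall>t\<le>\<tau>. X T (prof D a' c) 0 t \<le> R T (prof D a' c) 0 t * wv D a t) \<Longrightarrow>
        (\<Sum>t\<le>\<tau>. R T (prof D a' c) 0 t * wv D a t - X T (prof D a' c) 0 t) + X T (prof D a' c) 0 \<tau>
        \<le> (\<Sum>t<T. R T (prof D a c) 0 t * wv D a t - X T (prof D a c) 0 t) + G T (prof D a c) 0"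
    proof -
      fix a a' \<tau> assume a: "a < K" and a': "a' < K" and \<tau>: "\<tau> < T"
        and cond: "\<forall>t\<le>\<tau>. X T (prof D a' c) 0 t \<le> R T (prof D a' c) 0 t * wv D a t"
      have dif: "differ_only_in 0 (prof D a c) (prof D a' c)"
        by (simp add: differ_only_in_def prof_def)
      have "\<And>t. prof D a c 0 t = wv D a t" by (simp add: prof_def)
      then show "(\<Sum>t\<le>\<tau>. R T (prof D a' c) 0 t * wv D a t - X T (prof D a' c) 0 t) + X T (prof D a' c) 0 \<tau>
        \<le> (\<Sum>t<T. R T (prof D a c) 0 t * wv D a t - X T (prof D a c) 0 t) + G T (prof D a c) 0"
        using DEV[OF valid[OF a c] valid[OF a' c] k0 dif \<tau>] cond by simp
    qed
  qed (use lb in auto)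
  have bid1: "(\<Sum>c<K. (\<Sum>t<T. X T (prof D a c) 1 t) - G T (prof D a c) 1) \<le> B" if a: "a < K" for a
    unfolding B_def
  proof (rule single_bidder[where r = "\<lambda>c t. R T (prof D a c) 1 t" and l = l and b = b])
    show "T = K + D" by (simp add: T_def)
    show "2 \<le> D" by (rule D2)
    show "\<And>c t. c < K \<Longrightarrow> t < T \<Longrightarrow> 0 \<le> R T (prof D a c) 1 t \<and> R T (prof D a c) 1 t \<le> 1"
      using RB valid a k1 by blast
    show "X T (prof D a c) 1 t \<le> R T (prof D a c) 1 t * wv D c t" if "c < K" "t < T" for c t
    proof -
      have "X T (prof D a c) 1 t \<le> R T (prof D a c) 1 t * prof D a c 1 t"
        using IR[OF valid[OF a that(1)] k1 that(2)] .
      then show ?thesis by (simp add: prof_def)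
    qed
    show "\<And>c c' \<tau>. c < K \<Longrightarrow> c' < K \<Longrightarrow> \<tau> < T \<Longrightarrow> (\<forall>t\<le>\<tau>. X T (prof D a c') 1 t \<le> R T (prof D a c') 1 t * wv D c t) \<Longrightarrow>
        (\<Sum>t\<le>\<tau>. R T (prof D a c') 1 t * wv D c t - X T (prof D a c') 1 t) + X T (prof D a c') 1 \<tau>
        \<le> (\<Sum>t<T. R T (prof D a c) 1 t * wv D c t - X T (prof D a c) 1 t) + G T (prof D a c) 1"
    proof -
      fix c c' \<tau> assume c: "c < K" and c': "c' < K" and \<tau>: "\<tau> < T"
        and cond: "\<forall>t\<le>\<tau>. X T (prof D a c') 1 t \<le> R T (prof D a c') 1 t * wv D c t"
      have dif: "differ_only_in 1 (prof D a c) (prof D a c')"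
        unfolding differ_only_in_def prof_def by auto
      have "\<And>t. prof D a c 1 t = wv D c t" by (simp add: prof_def)
      then show "(\<Sum>t\<le>\<tau>. R T (prof D a c') 1 t * wv D c t - X T (prof D a c') 1 t) + X T (prof D a c') 1 \<tau>
        \<le> (\<Sum>t<T. R T (prof D a c) 1 t * wv D c t - X T (prof D a c) 1 t) + G T (prof D a c) 1"
        using DEV[OF valid[OF a c] valid[OF a c'] k1 dif \<tau>] cond by simp
    qed
  qed (use lb in auto)
  have rest: "(\<Sum>t<T. X T (prof D a c) i t) - G T (prof D a c) i \<le> 0"
    if a: "a < K" and c: "c < K" and i: "2 \<le> i" "i < k" for a c i
  proof -
    have z: "\<And>t. prof D a c i t = 0" using i by (simp add: prof_def)
    have dif: "differ_only_in i (prof D a c) (prof D a c)" by (simp add: differ_only_in_def)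
    have cond: "\<forall>t\<le>0. X T (prof D a c) i t \<le> R T (prof D a c) i t * prof D a c i t"
      using IR[OF valid[OF a c] i(2) T0] by simp
    have "(\<Sum>t\<le>0. R T (prof D a c) i t * prof D a c i t - X T (prof D a c) i t) + X T (prof D a c) i 0
        \<le> (\<Sum>t<T. R T (prof D a c) i t * prof D a c i t - X T (prof D a c) i t) + G T (prof D a c) i"
      using DEV[OF valid[OF a c] valid[OF a c] i(2) dif T0 cond] by simp
    then show ?thesis by (simp add: z sum_negf)
  qed
  have revsplit: "revenue k T (X T) (G T) (prof D a c) \<le>
      ((\<Sum>t<T. X T (prof D a c) 0 t) - G T (prof D a c) 0) + ((\<Sum>t<T. X T (prof D a c) 1 t) - G T (prof D a c) 1)"
    if a: "a < K" and c: "c < K" for a c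
  proof -
    define f where "f i = (\<Sum>t<T. X T (prof D a c) i t) - G T (prof D a c) i" for i
    have "revenue k T (X T) (G T) (prof D a c) = (\<Sum>i<k. f i)"
      unfolding revenue_def f_def by (simp add: sum_subtractf)
    also have "{..<k} = {0, 1} \<union> {2..<k}" using assms(1) by auto
    also have "(\<Sum>i\<in>{0, 1} \<union> {2..<k}. f i) = f 0 + f 1 + (\<Sum>i\<in>{2..<k}. f i)"
      by (subst sum.union_disjoint) auto
    also have "(\<Sum>i\<in>{2..<k}. f i) \<le> 0"
      using rest[OF a c] by (intro sum_nonpos) (auto simp: f_def)
    finally show ?thesis by (simp add: f_def)
  qed
  have lower: "real K * real K * (\<alpha> * H D - C) \<le> (\<Sum>a<K. \<Sum>c<K. revenue k T (X T) (G T) (prof D a c))"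
  proof -
    have "(\<Sum>a<K. \<Sum>c<K. \<alpha> * H D - C) \<le> (\<Sum>a<K. \<Sum>c<K. revenue k T (X T) (G T) (prof D a c))"
    proof (intro sum_mono)
      fix a c assume "a \<in> {..<K}" "c \<in> {..<K}"
      then have a: "a < K" and c: "c < K" by auto
      have "rev_STB k T (prof D a c) = H D" using assms(1) a c D2 by (intro prof_STB) (auto simp: T_def)
      then show "\<alpha> * H D - C \<le> revenue k T (X T) (G T) (prof D a c)" using Cb[OF valid[OF a c]] by simp
    qed
    then show ?thesis by simp
  qed
  have upper: "(\<Sum>a<K. \<Sum>c<K. revenue k T (X T) (G T) (prof D a c)) \<le> 2 * real K * B"
  proof -
    have "(\<Sum>a<K. \<Sum>c<K. revenue k T (X T) (G T) (prof D a c)) \<le>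
        (\<Sum>a<K. \<Sum>c<K. ((\<Sum>t<T. X T (prof D a c) 0 t) - G T (prof D a c) 0)) +
        (\<Sum>a<K. \<Sum>c<K. ((\<Sum>t<T. X T (prof D a c) 1 t) - G T (prof D a c) 1))"
      unfolding sum.distrib[symmetric] using revsplit by (intro sum_mono) auto
    also have "(\<Sum>a<K. \<Sum>c<K. ((\<Sum>t<T. X T (prof D a c) 0 t) - G T (prof D a c) 0))
        = (\<Sum>c<K. \<Sum>a<K. ((\<Sum>t<T. X T (prof D a c) 0 t) - G T (prof D a c) 0))"
      by (rule sum.swap)
    also have "\<dots> \<le> (\<Sum>c<K. B)" using bid0 by (intro sum_mono) auto
    also have "(\<Sum>a<K. \<Sum>c<K. ((\<Sum>t<T. X T (prof D a c) 1 t) - G T (prof D a c) 1)) \<le> (\<Sum>a<K. B)"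
      using bid1 by (intro sum_mono) auto
    finally show ?thesis by (simp add: mult_ac)
  qed
  define h where "h = H D"
  have h0: "0 \<le> h" by (simp add: h_def H_nonneg)
  have Bb: "B \<le> real D * h + real K * (h / exp 1 + 3)"
    unfolding B_def h_def using lb(6) by (intro add_left_mono mult_left_mono) auto
  have "real K * real K * (\<alpha> * h - C) \<le> 2 * real K * (real D * h + real K * (h / exp 1 + 3))"
    using lower upper Bb K0 unfolding h_def by (smt (verit) mult_left_mono of_nat_0_le_iff)
  then have "real K * (real K * (\<alpha> * h - C)) \<le> real K * (2 * (real D * h + real K * (h / exp 1 + 3)))"
    by (simp add: mult_ac)
  then have "real K * (\<alpha> * h - C) \<le> 2 * (real D * h + real K * (h / exp 1 + 3))"
    using K0 by simp
  then have "real m * real D * (\<alpha> * h - C) \<le> 2 * (real D * h + real m * real D * (h / exp 1 + 3))"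
    by (simp add: K_def)
  then have "real D * (real m * (\<alpha> * h - C)) \<le> real D * (2 * h + real m * (2 * h / exp 1 + 6))"
    by (simp add: algebra_simps)
  then have "real m * (\<alpha> * h - C) \<le> 2 * h + real m * (2 * h / exp 1 + 6)"
    using D2 by simp
  then have "\<alpha> * h - C \<le> 2 * h / real m + (2 * h / exp 1 + 6)"
    using m1 by (simp add: field_simps)
  moreover have "2 * h / real m \<le> \<delta> / 2 * h"
    using mq h0 by (metis mult_right_mono times_divide_eq_left mult.commute)
  ultimately have "\<alpha> * h - C \<le> \<delta> / 2 * h + 2 * h / exp 1 + 6" by simp
  moreover have "\<delta> / 2 * h = (\<alpha> * h - 2 * h / exp 1) / 2" by (simp add: \<delta>_def algebra_simps)
  moreover have "\<And>A p q :: real. A - C \<le> p + q + 6 \<Longrightarrow> p = (A - q) / 2 \<Longrightarrow> p \<le> C + 6" by (simp add: field_simps)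
  ultimately have "\<delta> / 2 * h \<le> C + 6" by blast
  then show False using key unfolding h_def by simp
qed

end
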